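(* Let $f:\mathbb{R}^+\to\mathbb{R}^+$ be a non-decreasing convex function with $f(0)=1$. Then for every integer $n\ge0$ there exists a complex Borel measure $\mu$ on the unit circle $\mathbb{T}$ such that $\hat\mu(k)=f(|k|)$ for all integers $|k|\le n$, and $\|\mu\|\le f(n)^2$ (total variation norm).
   Context: For a measure $\mu$ on $\mathbb{T}$, $\hat\mu(k)=\int_{\mathbb{T}} z^{-k}\,d\mu(z)$, $k\in\mathbb{Z}$. *)

theory Defs
  imports "HOL-Analysis.Analysis"
begin

definition circle_borel :: "complex measure" where
  "circle_borel = restrict_space borel (sphere 0 1)"

text \<open>Complex Borel measures on T are represented by densities: a pair (nu, h) with nu a finite
  positive Borel measure on T and h a nu-integrable complex function represents the complex
  measure  A \<mapsto> integral of h over A w.r.t. nu.  Every complex Borel measure mu arises this way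
  (take nu = |mu| and h = d mu / d|mu|, Radon-Nikodym/polar decomposition), and every such pair
  defines a complex Borel measure.\<close>
definition cmeasure_rep :: "complex measure \<Rightarrow> (complex \<Rightarrow> complex) \<Rightarrow> bool" where
  "cmeasure_rep \<nu> h \<longleftrightarrow> sets \<nu> = sets circle_borel \<and> finite_measure \<nu> \<and> integrable \<nu> h"

definition cm_fourier :: "complex measure \<Rightarrow> (complex \<Rightarrow> complex) \<Rightarrow> int \<Rightarrow> complex" where
  "cm_fourier \<nu> h k = integral\<^sup>L \<nu> (\<lambda>z. z powi (- k) * h z)"

definition cm_total_variation :: "complex measure \<Rightarrow> (complex \<Rightarrow> complex) \<Rightarrow> real" where
  "cm_total_variation \<nu> h = integral\<^sup>L \<nu> (\<lambda>z. norm (h z))"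

end

theory Submission imports Defs "HOL-Library.Real_Mod" begin

lemma powi_measurable[measurable]: "(\<lambda>z::complex. z powi m) \<in> borel_measurable borel"
proof (cases "m \<ge> 0")
  case True
  then show ?thesis by (simp add: power_int_def)
next
  case False
  then show ?thesis by (simp add: power_int_def)
qed

lemma root_sum:
  assumes N: "N > 0"
  shows "(\<Sum>j<N. cis (2*pi/N) powi (int j * d)) = (if int N dvd d then of_nat N else 0)"
proof -
  define q where "q = cis (2*pi/N) powi d"
  have e: "cis (2*pi/N) powi (int j * d) = q ^ j" for j
    unfolding q_def by (metis mult.commute power_int_mult power_int_of_nat)
  have qN: "q ^ N = 1"
  proof -
    have "q ^ N = cis (real N * (of_int d * (2*pi/N)))" unfolding q_def cis_power_int by (rule Complex.DeMoivre)
    also have "real N * (of_int d * (2*pi/N)) = of_int d * (2*pi)" using N by (simp add: field_simps)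
    also have "cis (of_int d * (2*pi)) = 1" by (rule iffD2[OF cis_eq_1_iff], rule exI[of _ d], rule refl)
    finally show ?thesis .
  qed
  have q1: "q = 1 \<longleftrightarrow> int N dvd d"
  proof
    assume "q = 1"
    then obtain m where m: "of_int d * (2*pi/N) = of_int m * (2*pi)"
      unfolding q_def cis_power_int cis_eq_1_iff by blast
    hence "real_of_int d * (2*pi) / N = of_int m * (2*pi)" by simp
    hence "real_of_int d * (2*pi) = of_int m * (2*pi) * N" using N by (simp add: divide_eq_eq)
    hence "real_of_int d = of_int m * N" by simp
    hence "real_of_int d = real_of_int (m * int N)" by simp
    hence "d = m * int N" by (rule of_int_eq_iff[THEN iffD1])
    thus "int N dvd d" by simp
  next
    assume "int N dvd d"
    then obtain m where "d = int N * m" by blast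
    hence "real_of_int d * (2*pi/N) = real N * (of_int m * (2*pi)) / N" by simp
    also have "\<dots> = of_int m * (2*pi)" using N by simp
    finally show "q = 1" unfolding q_def cis_power_int cis_eq_1_iff by blast
  qed
  show ?thesis
  proof (cases "int N dvd d")
    case True
    then have "q = 1" using q1 by simp
    then show ?thesis unfolding e using True by simp
  next
    case False
    then have "q \<noteq> 1" using q1 by simp
    then show ?thesis unfolding e sum_gp_strict using qN False by simp
  qed
qed

lemma single_count:
  "(\<Sum>i<r. (if int i = a then 1 else 0::real)) = (if 0 \<le> a \<and> a < int r then 1 else 0)"
  by (induction r) auto

lemma pair_count:
  "(\<Sum>i<r. \<Sum>l<r. (if int i - int l = c then 1 else 0::real)) = real (nat (int r - \<bar>c\<bar>))"
proof (induction r)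
  case 0
  then show ?case by simp
next
  case (Suc r)
  have a: "(\<Sum>i<r. (if int i - int r = c then 1 else 0::real)) = (if - int r \<le> c \<and> c < 0 then 1 else 0)"
    using single_count[where r=r and a="c + int r"] by (simp add: algebra_simps eq_diff_eq)
  have b: "(\<Sum>l<r. (if int r - int l = c then 1 else 0::real)) = (if 0 < c \<and> c \<le> int r then 1 else 0)"
  proof -
    have "(\<Sum>l<r. (if int r - int l = c then 1 else 0::real)) = (\<Sum>l<r. (if int l = int r - c then 1 else 0::real))"
      by (intro sum.cong) auto
    also have "\<dots> = (if 0 < c \<and> c \<le> int r then 1 else 0)" by (subst single_count) auto
    finally show ?thesis .
  qed
  have "(\<Sum>i<Suc r. \<Sum>l<Suc r. (if int i - int l = c then 1 else 0::real))
     = (\<Sum>i<r. \<Sum>l<r. (if int i - int l = c then 1 else 0::real))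
       + (\<Sum>i<r. (if int i - int r = c then 1 else 0::real))
       + (\<Sum>l<r. (if int r - int l = c then 1 else 0::real)) + (if c = 0 then 1 else 0)"
    by (simp add: sum.distrib)
  also have "\<dots> = real (nat (int (Suc r) - \<bar>c\<bar>))"
    unfolding Suc.IH a b by auto
  finally show ?case .
qed

lemma kink:
  fixes F :: "nat \<Rightarrow> real"
  assumes "a \<le> n"
  shows "(\<Sum>s\<in>{1..n}. ((if s = 0 then 0 else F s - F (s-1)) - (if s - 1 = 0 then 0 else F (s-1) - F (s-1-1))) * real (a + 1 - s)) = F a - F 0"
  using assms
proof (induction a)
  case 0
  have "\<forall>s\<in>{1..n}. real (0 + 1 - s) = 0" by auto
  then show ?case by simp
next
  case (Suc a)
  define e where "e s = (if s = 0 then 0 else F s - F (s-1)) - (if s - 1 = 0 then 0 else F (s-1) - F (s-1-1))" for s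
  have tel: "(\<Sum>s\<in>{1..m}. e s) = (if m = 0 then 0 else F m - F (m-1))" for m
    by (induction m) (auto simp: e_def)
  have "(\<Sum>s\<in>{1..n}. e s * real (Suc a + 1 - s)) = (\<Sum>s\<in>{1..n}. e s * real (a + 1 - s) + (if s \<le> Suc a then e s else 0))"
    by (intro sum.cong) (auto simp: algebra_simps of_nat_diff)
  also have "\<dots> = (F a - F 0) + (\<Sum>s\<in>{1..n}. (if s \<le> Suc a then e s else 0))"
    using Suc by (simp add: sum.distrib e_def)
  also have "(\<Sum>s\<in>{1..n}. (if s \<le> Suc a then e s else 0)) = (\<Sum>s\<in>{1..Suc a}. e s)"
  proof -
    have "{1..n} \<inter> {s. s \<le> Suc a} = {1..Suc a}" using Suc.prems by auto
    then show ?thesis by (simp add: sum.If_cases del: atLeastAtMost_iff)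
  qed
  also have "\<dots> = F (Suc a) - F a" unfolding tel by simp
  finally show ?case by (simp add: e_def)
qed

lemma e_nonneg:
  fixes f :: "real \<Rightarrow> real"
  assumes mono: "mono_on {0..} f" and conv: "convex_on {0..} f" and s: "s \<ge> 1"
  shows "(if s = 0 then 0 else f (real s) - f (real (s-1))) - (if s - 1 = 0 then 0 else f (real (s-1)) - f (real (s-1-1))) \<ge> 0"
proof (cases "s = 1")
  case True
  have "f (real 0) \<le> f (real 1)" by (rule mono_onD[OF mono]) auto
  then show ?thesis using True by simp
next
  case False
  then have s2: "s \<ge> 2" using s by simp
  have "f ((1 - 1/2) *\<^sub>R real s + (1/2) *\<^sub>R real (s-1-1)) \<le> (1 - 1/2) * f (real s) + (1/2) * f (real (s-1-1))"
    by (rule convex_onD[OF conv]) auto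
  moreover have "(1 - 1/2) *\<^sub>R real s + (1/2) *\<^sub>R real (s-1-1) = real (s-1)" using s2 by (simp add: of_nat_diff field_simps)
  ultimately have "f (real (s-1)) \<le> (f (real s) + f (real (s-1-1))) / 2" by simp
  then show ?thesis using s2 by simp
qed

lemma K_normsq:
  fixes x :: complex
  assumes x: "norm x = 1"
  shows "(\<Sum>i<r. \<Sum>l<r. x powi (int i - int l)) = of_real ((norm (\<Sum>i<r. x ^ i))\<^sup>2)"
proof -
  have x0: "x \<noteq> 0" using x by auto
  have inv: "inverse x = cnj x" using x complex_div_cnj[of 1 x] by (simp add: divide_inverse)
  have t: "x powi (int i - int l) = x ^ i * cnj (x ^ l)" for i l
  proof -
    have "x powi (int i - int l) = x powi int i * x powi (- int l)"
      using power_int_add[of x "int i" "- int l"] x0 by simp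
    also have "x powi (- int l) = cnj (x ^ l)" by (simp add: power_int_minus inv[symmetric] power_inverse)
    finally show ?thesis by simp
  qed
  show ?thesis unfolding complex_norm_square t cnj_sum sum_product ..
qed

lemma pmul: "(y::complex) \<noteq> 0 \<Longrightarrow> y powi a * y powi b = y powi (a + b)"
  by (simp add: power_int_add)

lemma pmul2: "(y::complex) \<noteq> 0 \<Longrightarrow> y powi a * y ^ m = y powi (a + int m)"
  by (simp add: power_int_add)

lemma pmul3: "(y::complex) \<noteq> 0 \<Longrightarrow> y ^ m * y powi a = y powi (int m + a)"
  by (simp add: power_int_add)

lemma small_dvd: "\<bar>m\<bar> < int N \<Longrightarrow> (int N dvd m \<longleftrightarrow> m = 0)"
  using dvd_imp_le_int[of m "int N"] by auto

theorem lemma3p1: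
  fixes f :: "real \<Rightarrow> real" and n :: nat
  assumes pos: "\<forall>x\<ge>0. f x \<ge> 0"
    and mono: "mono_on {0..} f"
    and conv: "convex_on {0..} f"
    and f0: "f 0 = 1"
  shows "\<exists>\<nu> h. cmeasure_rep \<nu> h
           \<and> (\<forall>k::int. \<bar>k\<bar> \<le> int n \<longrightarrow> cm_fourier \<nu> h k = complex_of_real (f (real_of_int \<bar>k\<bar>)))
           \<and> cm_total_variation \<nu> h \<le> (f (real n))\<^sup>2"
proof -
  define N where "N = 3*n+1"
  have N0: "N > 0" unfolding N_def by simp
  define w where "w = cis (2*pi/N)"
  define x where "x j = w ^ j" for j :: nat
  have xn: "norm (x j) = 1" for j unfolding x_def w_def by (simp add: norm_power)
  have x0: "x j \<noteq> 0" for j using xn[of j] by auto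
  have S: "(\<Sum>j<N. x j powi m) = (if int N dvd m then of_nat N else 0)" for m
  proof -
    have "x j powi m = cis (2*pi/N) powi (int j * m)" for j
      by (simp add: x_def w_def power_int_mult)
    then show ?thesis using root_sum[OF N0, of m] by simp
  qed
  define F where "F a = f (real a)" for a
  define e where "e s = (if s = 0 then 0 else F s - F (s-1)) - (if s - 1 = 0 then 0 else F (s-1) - F (s-1-1))" for s
  have e0: "s \<ge> 1 \<Longrightarrow> e s \<ge> 0" for s
    unfolding e_def F_def using e_nonneg[OF mono conv] by blast
  have kinkF: "a \<le> n \<Longrightarrow> (\<Sum>s\<in>{1..n}. e s * real (a + 1 - s)) = F a - 1" for a
    using kink[of a n F] unfolding e_def by (simp add: F_def f0)
  define D where "D z = (\<Sum>t<N. z powi int t)" for z :: complex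
  define K where "K r z = (\<Sum>i<r. \<Sum>l<r. z powi (int i - int l))" for r :: nat and z :: complex
  define h where "h z = (D z + (\<Sum>s\<in>{1..n}. of_real (e s) * ((z powi int n + z powi (- int n)) * K (n + 1 - s) z))) / of_nat N" for z
  define \<nu> where "\<nu> = distr (count_space {..<N}) circle_borel x"
  have xm: "x \<in> measurable (count_space {..<N}) circle_borel"
    by (simp add: circle_borel_def space_restrict_space xn)
  have hmb: "h \<in> borel_measurable borel" unfolding h_def D_def K_def by measurable
  have hm: "h \<in> borel_measurable circle_borel"
    unfolding circle_borel_def by (rule measurable_restrict_space1[OF hmb])
  have intg: "integral\<^sup>L \<nu> g = (\<Sum>j<N. g (x j))" if "g \<in> borel_measurable circle_borel" for g :: "complex \<Rightarrow> 'b::{banach, second_countable_topology}"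
    unfolding \<nu>_def by (simp add: integral_distr[OF xm that] lebesgue_integral_count_space_finite)
  have rep: "cmeasure_rep \<nu> h"
    unfolding cmeasure_rep_def
  proof (intro conjI)
    show "sets \<nu> = sets circle_borel" by (simp add: \<nu>_def)
    show "finite_measure \<nu>" unfolding \<nu>_def
      by (rule finite_measure.finite_measure_distr[OF finite_measure_count_space xm]) simp
    show "integrable \<nu> h" unfolding \<nu>_def integrable_distr_eq[OF xm hm]
      by (rule integrable_count_space) simp
  qed
  have four: "cm_fourier \<nu> h k = complex_of_real (f (real_of_int \<bar>k\<bar>))" if k: "\<bar>k\<bar> \<le> int n" for k
  proof -
    have gm: "(\<lambda>z. z powi (- k) * h z) \<in> borel_measurable circle_borel"
      unfolding circle_borel_def by (rule measurable_restrict_space1) (use hmb in measurable)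
    have c1: "cm_fourier \<nu> h k = (\<Sum>j<N. x j powi (- k) * h (x j))"
      unfolding cm_fourier_def by (rule intg[OF gm])
    have A: "(\<Sum>j<N. x j powi (-k) * D (x j)) = of_nat N"
    proof -
      have "(\<Sum>j<N. x j powi (-k) * D (x j)) = (\<Sum>j<N. \<Sum>t<N. x j powi (-k + int t))"
        unfolding D_def by (simp add: sum_distrib_left pmul pmul2 x0)
      also have "\<dots> = (\<Sum>t<N. \<Sum>j<N. x j powi (-k + int t))" by (rule sum.swap)
      also have "\<dots> = (\<Sum>t<N. if t = nat (k mod int N) then of_nat N else 0)"
      proof (intro sum.cong refl)
        fix t assume t: "t \<in> {..<N}"
        have "int N dvd (-k + int t) \<longleftrightarrow> int t mod int N = k mod int N"
          by (simp add: mod_eq_dvd_iff)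
        also have "int t mod int N = int t" using t by simp
        also have "int t = k mod int N \<longleftrightarrow> t = nat (k mod int N)" using N0 by auto
        finally show "(\<Sum>j<N. x j powi (-k + int t)) = (if t = nat (k mod int N) then of_nat N else 0)"
          unfolding S by simp
      qed
      also have "\<dots> = of_nat N"
      proof -
        have "nat (k mod int N) < N" using N0 by (simp add: nat_less_iff)
        then show ?thesis by (simp add: sum.delta)
      qed
      finally show ?thesis .
    qed
    have B: "(\<Sum>j<N. x j powi (-k) * ((x j powi int n + x j powi (- int n)) * K (n + 1 - s) (x j)))
             = of_nat N * of_nat (nat \<bar>k\<bar> + 1 - s)" if s: "s \<in> {1..n}" for s
    proof -
      define r where "r = n + 1 - s"
      have rn: "r \<le> n" using s unfolding r_def by auto
      have "(\<Sum>j<N. x j powi (-k) * ((x j powi int n + x j powi (- int n)) * K r (x j)))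
          = (\<Sum>j<N. \<Sum>i<r. \<Sum>l<r. x j powi (-k + (int n + (int i - int l))) + x j powi (-k + (- int n + (int i - int l))))"
        unfolding K_def by (simp add: sum_distrib_left distrib_left distrib_right pmul pmul3 x0 sum.distrib)
      also have "\<dots> = (\<Sum>i<r. \<Sum>l<r. \<Sum>j<N. x j powi (-k + (int n + (int i - int l))) + x j powi (-k + (- int n + (int i - int l))))"
        by (simp add: sum.swap[of _ "{..<N}"])
      also have "\<dots> = (\<Sum>i<r. \<Sum>l<r. of_real (real N * ((if int i - int l = k - int n then 1 else 0) + (if int i - int l = k + int n then 1 else 0))))"
      proof (intro sum.cong refl)
        fix i l assume i: "i \<in> {..<r}" and l: "l \<in> {..<r}"
        have b1: "\<bar>-k + (int n + (int i - int l))\<bar> < int N" using i l k rn unfolding N_def by auto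
        have b2: "\<bar>-k + (- int n + (int i - int l))\<bar> < int N" using i l k rn unfolding N_def by auto
        show "(\<Sum>j<N. x j powi (-k + (int n + (int i - int l))) + x j powi (-k + (- int n + (int i - int l))))
          = of_real (real N * ((if int i - int l = k - int n then 1 else 0) + (if int i - int l = k + int n then 1 else 0)))"
          unfolding sum.distrib S small_dvd[OF b1] small_dvd[OF b2] by auto
      qed
      also have "\<dots> = of_real (real N * ((\<Sum>i<r. \<Sum>l<r. (if int i - int l = k - int n then 1 else 0)) + (\<Sum>i<r. \<Sum>l<r. (if int i - int l = k + int n then 1 else 0))))"
        by (simp add: sum.distrib sum_distrib_left distrib_left)
      also have "\<dots> = of_real (real N * (real (nat (int r - \<bar>k - int n\<bar>)) + real (nat (int r - \<bar>k + int n\<bar>))))"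
        unfolding pair_count ..
      also have "nat (int r - \<bar>k - int n\<bar>) + nat (int r - \<bar>k + int n\<bar>) = nat \<bar>k\<bar> + 1 - s"
        using s k unfolding r_def by auto
      hence "of_real (real N * (real (nat (int r - \<bar>k - int n\<bar>)) + real (nat (int r - \<bar>k + int n\<bar>))))
           = (of_real (real N * real (nat \<bar>k\<bar> + 1 - s)) :: complex)"
        unfolding of_nat_add[symmetric] by simp
      finally show ?thesis unfolding r_def by simp
    qed
    have "(\<Sum>j<N. x j powi (- k) * h (x j)) = ((\<Sum>j<N. x j powi (-k) * D (x j))
        + (\<Sum>s\<in>{1..n}. of_real (e s) * (\<Sum>j<N. x j powi (-k) * ((x j powi int n + x j powi (- int n)) * K (n + 1 - s) (x j))))) / of_nat N"
      unfolding h_def by (simp add: sum_distrib_left distrib_left sum.distrib sum_divide_distrib[symmetric] algebra_simps sum.swap[of _ "{..<N}"])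
    also have "\<dots> = (of_nat N + (\<Sum>s\<in>{1..n}. of_real (e s) * (of_nat N * of_nat (nat \<bar>k\<bar> + 1 - s)))) / of_nat N"
      using B by (simp add: A)
    also have "\<dots> = of_real (1 + (\<Sum>s\<in>{1..n}. e s * real (nat \<bar>k\<bar> + 1 - s)))"
      using N0 by (simp add: field_simps sum_distrib_left)
    also have "\<dots> = of_real (F (nat \<bar>k\<bar>))" using kinkF[of "nat \<bar>k\<bar>"] k by simp
    finally show ?thesis unfolding c1 F_def by simp
  qed
  have tv: "cm_total_variation \<nu> h \<le> (f (real n))\<^sup>2"
  proof -
    have gm: "(\<lambda>z. norm (h z)) \<in> borel_measurable circle_borel" using hm by measurable
    have c1: "cm_total_variation \<nu> h = (\<Sum>j<N. norm (h (x j)))"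
      unfolding cm_total_variation_def by (rule intg[OF gm])
    define q where "q r z = norm (\<Sum>i<r. (z::complex) ^ i)" for r z
    have Kq: "K r (x j) = of_real ((q r (x j))\<^sup>2)" for r j
      unfolding K_def q_def by (rule K_normsq[OF xn])
    have pt: "norm (h (x j)) \<le> (norm (D (x j)) + (\<Sum>s\<in>{1..n}. e s * (2 * (q (n + 1 - s) (x j))\<^sup>2))) / real N" for j
    proof -
      have n2: "norm (x j powi int n + x j powi (- int n)) \<le> 2"
        using norm_triangle_ineq[of "x j powi int n" "x j powi (- int n)"] by (simp add: norm_power_int norm_power xn)
      have "norm (D (x j) + (\<Sum>s\<in>{1..n}. of_real (e s) * ((x j powi int n + x j powi (- int n)) * K (n + 1 - s) (x j))))
          \<le> norm (D (x j)) + (\<Sum>s\<in>{1..n}. norm (of_real (e s) * ((x j powi int n + x j powi (- int n)) * K (n + 1 - s) (x j))))"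
        by (rule order_trans[OF norm_triangle_ineq add_left_mono[OF norm_sum]])
      also have "\<dots> \<le> norm (D (x j)) + (\<Sum>s\<in>{1..n}. e s * (2 * (q (n + 1 - s) (x j))\<^sup>2))"
      proof (intro add_left_mono sum_mono)
        fix s assume s: "s \<in> {1..n}"
        have "norm (of_real (e s) * ((x j powi int n + x j powi (- int n)) * K (n + 1 - s) (x j)))
            = e s * (norm (x j powi int n + x j powi (- int n)) * (q (n + 1 - s) (x j))\<^sup>2)"
          using e0[of s] s by (simp add: Kq norm_mult norm_power power2_abs)
        also have "\<dots> \<le> e s * (2 * (q (n + 1 - s) (x j))\<^sup>2)"
          using e0[of s] s n2 by (intro mult_left_mono mult_right_mono) auto
        finally show "norm (of_real (e s) * ((x j powi int n + x j powi (- int n)) * K (n + 1 - s) (x j)))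
            \<le> e s * (2 * (q (n + 1 - s) (x j))\<^sup>2)" .
      qed
      finally show ?thesis unfolding h_def using N0 by (simp add: norm_divide divide_right_mono)
    qed
    have Dsum: "(\<Sum>j<N. norm (D (x j))) = real N"
    proof -
      have "D (x j) = (if j = 0 then of_nat N else 0)" if j: "j < N" for j
      proof -
        have "D (x j) = (\<Sum>t<N. x t powi int j)"
          unfolding D_def x_def by (simp add: power_mult[symmetric] mult.commute)
        also have "\<dots> = (if int N dvd int j then of_nat N else 0)" by (rule S)
        also have "int N dvd int j \<longleftrightarrow> j = 0" using j by (auto dest: dvd_imp_le)
        finally show ?thesis .
      qed
      then have "(\<Sum>j<N. norm (D (x j))) = (\<Sum>j<N. if j = 0 then real N else 0)"
        by (intro sum.cong) auto
      also have "\<dots> = real N" using N0 by (simp add: sum.delta)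
      finally show ?thesis .
    qed
    have qsum: "(\<Sum>j<N. (q (n + 1 - s) (x j))\<^sup>2) = real N * real (n + 1 - s)" if s: "s \<in> {1..n}" for s
    proof -
      define r where "r = n + 1 - s"
      have rn: "r \<le> n" using s unfolding r_def by auto
      have "of_real (\<Sum>j<N. (q r (x j))\<^sup>2) = (\<Sum>j<N. K r (x j))" by (simp add: Kq)
      also have "\<dots> = (\<Sum>i<r. \<Sum>l<r. \<Sum>j<N. x j powi (int i - int l))"
        unfolding K_def by (simp add: sum.swap[of _ "{..<N}"])
      also have "\<dots> = (\<Sum>i<r. \<Sum>l<r. if i = l then of_nat N else 0)"
      proof (intro sum.cong refl)
        fix i l assume i: "i \<in> {..<r}" and l: "l \<in> {..<r}"
        have b: "\<bar>int i - int l\<bar> < int N" using i l rn unfolding N_def by auto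
        show "(\<Sum>j<N. x j powi (int i - int l)) = (if i = l then of_nat N else 0)"
          unfolding S small_dvd[OF b] by auto
      qed
      also have "\<dots> = of_real (real N * real r)" by simp
      finally show ?thesis unfolding r_def of_real_eq_iff .
    qed
    have "(\<Sum>j<N. norm (h (x j))) \<le> (\<Sum>j<N. (norm (D (x j)) + (\<Sum>s\<in>{1..n}. e s * (2 * (q (n + 1 - s) (x j))\<^sup>2))) / real N)"
      by (rule sum_mono[OF pt])
    also have "\<dots> = ((\<Sum>j<N. norm (D (x j))) + (\<Sum>s\<in>{1..n}. e s * (2 * (\<Sum>j<N. (q (n + 1 - s) (x j))\<^sup>2)))) / real N"
      by (simp add: sum_divide_distrib[symmetric] sum.distrib sum_distrib_left sum.swap[of _ "{..<N}"])
    also have "\<dots> = (real N + (\<Sum>s\<in>{1..n}. e s * (2 * (real N * real (n + 1 - s))))) / real N"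
      using qsum by (simp add: Dsum)
    also have "\<dots> = 1 + 2 * (\<Sum>s\<in>{1..n}. e s * real (n + 1 - s))"
      using N0 by (simp add: field_simps sum_distrib_left)
    also have "\<dots> = 1 + 2 * (F n - 1)" using kinkF[of n] by simp
    also have "\<dots> \<le> (F n)\<^sup>2" using zero_le_power2[of "F n - 1"] unfolding power2_diff by simp
    finally show ?thesis unfolding c1 F_def .
  qed
  show ?thesis using rep four tv by blast
qed

end
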